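(* Let $n$ be a positive integer, $p$ a prime number, $I$ an infinite set, and $R=\prod_{i\in I}\mathbb Z/np^2\mathbb Z$. There exists a $3\times3$ matrix with entries in $R$ that is partition regular over $R$ but does not satisfy the generalised columns condition.
   Context: A $k\times l$ matrix $\mathbf A$ over $R$ is partition regular over $R$ if for every $r\ge1$ and every map $\chi\colon R\to\{1,\dots,r\}$ there is a nonzero $\mathbf x\in R^l$ with $\mathbf A\mathbf x=0$ and all entries of $\mathbf x$ of the same colour. With columns $\mathbf c_1,\dots,\mathbf c_l$, $\mathbf A$ satisfies the generalised columns condition if there exist $m\ge0$, a partition $\{1,\dots,l\}=I_0\cup\dots\cup I_m$ and $d_0,\dots,d_m\in R\setminus\{0\}$ with (i) $d_0\sum_{i\in I_0}\mathbf c_i=0$; (ii) for $1\le t\le m$, $d_t\sum_{i\in I_t}\mathbf c_i$ lies in the $R$-submodule generated by the $\mathbf c_j$ with $j\in I_0\cup\dots\cup I_{t-1}$; (iii) if $m>0$, the ideal $d_0(d_1\cdots d_m)^nR$ is infinite for every $n\ge0$. *)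

theory Defs
  imports "HOL-Computational_Algebra.Primes" "HOL-Algebra.Ring"
begin

text \<open>A k x l matrix over a ring R is represented as a function
  A :: nat => nat => 'a, with relevant entries A i j for i < k, j < l.
  Vectors in R^l are functions nat => 'a, relevant at indices j < l.\<close>

definition matrix_over :: "('a, 'b) ring_scheme \<Rightarrow> nat \<Rightarrow> nat \<Rightarrow> (nat \<Rightarrow> nat \<Rightarrow> 'a) \<Rightarrow> bool" where
  "matrix_over R k l A \<longleftrightarrow> (\<forall>i<k. \<forall>j<l. A i j \<in> carrier R)"

definition partition_regular :: "('a, 'b) ring_scheme \<Rightarrow> nat \<Rightarrow> nat \<Rightarrow> (nat \<Rightarrow> nat \<Rightarrow> 'a) \<Rightarrow> bool" where
  "partition_regular R k l A \<longleftrightarrow>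
    (\<forall>r::nat. r \<ge> 1 \<longrightarrow> (\<forall>\<chi>. \<chi> \<in> carrier R \<rightarrow> {1..r} \<longrightarrow>
      (\<exists>x. (\<forall>j<l. x j \<in> carrier R) \<and> (\<exists>j<l. x j \<noteq> \<zero>\<^bsub>R\<^esub>) \<and>
           (\<forall>i<k. (\<Oplus>\<^bsub>R\<^esub>j\<in>{..<l}. A i j \<otimes>\<^bsub>R\<^esub> x j) = \<zero>\<^bsub>R\<^esub>) \<and>
           (\<exists>c. \<forall>j<l. \<chi> (x j) = c))))"

text \<open>Generalised columns condition. Columns are indexed by j < l (0-based);
  the partition I_0, ..., I_m into nonempty blocks is given by a block map
  blk with I_t = {j < l. blk j = t}.\<close>
definition generalised_columns_condition :: "('a, 'b) ring_scheme \<Rightarrow> nat \<Rightarrow> nat \<Rightarrow> (nat \<Rightarrow> nat \<Rightarrow> 'a) \<Rightarrow> bool" where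
  "generalised_columns_condition R k l A \<longleftrightarrow>
    (\<exists>(m::nat) (blk::nat \<Rightarrow> nat) (d::nat \<Rightarrow> 'a).
       (\<forall>j<l. blk j \<le> m) \<and>
       (\<forall>t\<le>m. \<exists>j<l. blk j = t) \<and>
       (\<forall>t\<le>m. d t \<in> carrier R - {\<zero>\<^bsub>R\<^esub>}) \<and>
       (\<forall>i<k. d 0 \<otimes>\<^bsub>R\<^esub> (\<Oplus>\<^bsub>R\<^esub>j\<in>{j. j < l \<and> blk j = 0}. A i j) = \<zero>\<^bsub>R\<^esub>) \<and>
       (\<forall>t. 1 \<le> t \<and> t \<le> m \<longrightarrow>
          (\<exists>a. (\<forall>j. j < l \<and> blk j < t \<longrightarrow> a j \<in> carrier R) \<and>
               (\<forall>i<k. d t \<otimes>\<^bsub>R\<^esub> (\<Oplus>\<^bsub>R\<^esub>j\<in>{j. j < l \<and> blk j = t}. A i j)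
                     = (\<Oplus>\<^bsub>R\<^esub>j\<in>{j. j < l \<and> blk j < t}. a j \<otimes>\<^bsub>R\<^esub> A i j)))) \<and>
       (m > 0 \<longrightarrow> (\<forall>n::nat. infinite
          {d 0 \<otimes>\<^bsub>R\<^esub> ((\<Otimes>\<^bsub>R\<^esub>t\<in>{1..m}. d t) [^]\<^bsub>R\<^esub> n) \<otimes>\<^bsub>R\<^esub> y | y. y \<in> carrier R})))"

text \<open>The ring prod_{i in I} Z/qZ, elements being functions I -> {0..<q}
  (extended by 0 outside I), with componentwise arithmetic mod q.\<close>
definition prod_zmod :: "'i set \<Rightarrow> int \<Rightarrow> ('i \<Rightarrow> int) ring" where
  "prod_zmod I q =
    \<lparr>carrier = {f. (\<forall>i\<in>I. f i \<in> {0..<q}) \<and> (\<forall>i. i \<notin> I \<longrightarrow> f i = 0)},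
     mult = (\<lambda>f g i. if i \<in> I then (f i * g i) mod q else 0),
     one = (\<lambda>i. if i \<in> I then 1 mod q else 0),
     zero = (\<lambda>i. 0),
     add = (\<lambda>f g i. if i \<in> I then (f i + g i) mod q else 0)\<rparr>"

end

theory Submission
  imports Defs "HOL-Library.Ramsey"
begin

definition cst :: "'i set \<Rightarrow> int \<Rightarrow> int \<Rightarrow> ('i \<Rightarrow> int)" where
  "cst I q c = (\<lambda>i. if i \<in> I then c mod q else 0)"

lemma pz_carrier: "f \<in> carrier (prod_zmod I q) \<longleftrightarrow>
   (\<forall>i\<in>I. 0 \<le> f i \<and> f i < q) \<and> (\<forall>i. i \<notin> I \<longrightarrow> f i = 0)"
  by (auto simp: prod_zmod_def)

lemma pz_simps:
  "mult (prod_zmod I q) f g = (\<lambda>i. if i \<in> I then (f i * g i) mod q else 0)"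
  "add (prod_zmod I q) f g = (\<lambda>i. if i \<in> I then (f i + g i) mod q else 0)"
  "zero (prod_zmod I q) = (\<lambda>i. 0)"
  "one (prod_zmod I q) = (\<lambda>i. if i \<in> I then 1 mod q else 0)"
  by (simp_all add: prod_zmod_def)

lemma cst_carrier: "q > 0 \<Longrightarrow> cst I q c \<in> carrier (prod_zmod I q)"
  by (auto simp: pz_carrier cst_def)

lemma pz_am: assumes "q > 0" shows "abelian_monoid (prod_zmod I q)"
proof (rule abelian_monoidI)
  fix x y z assume x: "x \<in> carrier (prod_zmod I q)" and y: "y \<in> carrier (prod_zmod I q)"
    and z: "z \<in> carrier (prod_zmod I q)"
  show "x \<oplus>\<^bsub>prod_zmod I q\<^esub> y \<in> carrier (prod_zmod I q)"
    using assms by (auto simp: pz_carrier pz_simps)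
  show "x \<oplus>\<^bsub>prod_zmod I q\<^esub> y \<oplus>\<^bsub>prod_zmod I q\<^esub> z =
        x \<oplus>\<^bsub>prod_zmod I q\<^esub> (y \<oplus>\<^bsub>prod_zmod I q\<^esub> z)"
    by (auto simp: pz_simps mod_add_left_eq mod_add_right_eq add.assoc)
  show "x \<oplus>\<^bsub>prod_zmod I q\<^esub> y = y \<oplus>\<^bsub>prod_zmod I q\<^esub> x"
    by (auto simp: pz_simps add.commute)
next
  show "\<zero>\<^bsub>prod_zmod I q\<^esub> \<in> carrier (prod_zmod I q)"
    using assms by (auto simp: pz_carrier pz_simps)
next
  fix x assume x: "x \<in> carrier (prod_zmod I q)"
  then show "\<zero>\<^bsub>prod_zmod I q\<^esub> \<oplus>\<^bsub>prod_zmod I q\<^esub> x = x"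
    by (auto simp: pz_carrier pz_simps fun_eq_iff)
qed

lemma pz_cm: assumes "q > 1" shows "comm_monoid (prod_zmod I q)"
proof (rule comm_monoidI)
  fix x y z assume x: "x \<in> carrier (prod_zmod I q)" and y: "y \<in> carrier (prod_zmod I q)"
    and z: "z \<in> carrier (prod_zmod I q)"
  show "x \<otimes>\<^bsub>prod_zmod I q\<^esub> y \<in> carrier (prod_zmod I q)"
    using assms by (auto simp: pz_carrier pz_simps)
  show "x \<otimes>\<^bsub>prod_zmod I q\<^esub> y \<otimes>\<^bsub>prod_zmod I q\<^esub> z =
        x \<otimes>\<^bsub>prod_zmod I q\<^esub> (y \<otimes>\<^bsub>prod_zmod I q\<^esub> z)"
    by (auto simp: pz_simps mod_mult_left_eq mod_mult_right_eq mult.assoc)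
  show "x \<otimes>\<^bsub>prod_zmod I q\<^esub> y = y \<otimes>\<^bsub>prod_zmod I q\<^esub> x"
    by (auto simp: pz_simps mult.commute)
next
  show "\<one>\<^bsub>prod_zmod I q\<^esub> \<in> carrier (prod_zmod I q)"
    using assms by (auto simp: pz_carrier pz_simps)
next
  fix x assume x: "x \<in> carrier (prod_zmod I q)"
  then show "\<one>\<^bsub>prod_zmod I q\<^esub> \<otimes>\<^bsub>prod_zmod I q\<^esub> x = x"
    using assms by (auto simp: pz_carrier pz_simps fun_eq_iff)
qed

lemma finsum_eval:
  assumes q: "q > 0" and fin: "finite S" and f: "f \<in> S \<rightarrow> carrier (prod_zmod I q)"
  shows "finsum (prod_zmod I q) f S = (\<lambda>i. if i \<in> I then (\<Sum>j\<in>S. f j i) mod q else 0)"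
  using fin f
proof (induction S rule: finite_induct)
  case empty
  interpret abelian_monoid "prod_zmod I q" using pz_am[OF q] .
  show ?case by (simp add: pz_simps fun_eq_iff)
next
  case (insert x F)
  interpret abelian_monoid "prod_zmod I q" using pz_am[OF q] .
  have "finsum (prod_zmod I q) f (insert x F) = f x \<oplus>\<^bsub>prod_zmod I q\<^esub> finsum (prod_zmod I q) f F"
    using insert by (intro finsum_insert) auto
  also have "\<dots> = (\<lambda>i. if i \<in> I then (\<Sum>j\<in>insert x F. f j i) mod q else 0)"
    using insert by (auto simp: pz_simps fun_eq_iff mod_add_right_eq)
  finally show ?case .
qed


lemma sum_cst_right:
  assumes q: "q > 0" and fin: "finite S" and a: "\<forall>j\<in>S. a j \<in> carrier (prod_zmod I q)"
    and i: "i \<in> I"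
  shows "finsum (prod_zmod I q) (\<lambda>j. a j \<otimes>\<^bsub>prod_zmod I q\<^esub> cst I q (c j)) S i = (\<Sum>j\<in>S. a j i * c j) mod q"
proof -
  have "finsum (prod_zmod I q) (\<lambda>j. a j \<otimes>\<^bsub>prod_zmod I q\<^esub> cst I q (c j)) S i
      = (\<Sum>j\<in>S. (a j i * (c j mod q)) mod q) mod q"
    using q fin a i by (subst finsum_eval) (auto simp: pz_simps cst_def pz_carrier)
  also have "\<dots> = (\<Sum>j\<in>S. a j i * c j) mod q"
    by (simp add: mod_sum_eq mod_mult_right_eq)
  finally show ?thesis .
qed

lemma sum_cst_left:
  assumes q: "q > 0" and fin: "finite S" and a: "\<forall>j\<in>S. a j \<in> carrier (prod_zmod I q)"
    and i: "i \<in> I"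
  shows "finsum (prod_zmod I q) (\<lambda>j. cst I q (c j) \<otimes>\<^bsub>prod_zmod I q\<^esub> a j) S i = (\<Sum>j\<in>S. c j * a j i) mod q"
proof -
  have "finsum (prod_zmod I q) (\<lambda>j. cst I q (c j) \<otimes>\<^bsub>prod_zmod I q\<^esub> a j) S i
      = (\<Sum>j\<in>S. ((c j mod q) * a j i) mod q) mod q"
    using q fin a i by (subst finsum_eval) (auto simp: pz_simps cst_def pz_carrier)
  also have "\<dots> = (\<Sum>j\<in>S. c j * a j i) mod q"
    by (simp add: mod_sum_eq mod_mult_left_eq)
  finally show ?thesis .
qed

lemma prod_sum_cst:
  assumes q: "q > 0" and fin: "finite S" and d: "d \<in> carrier (prod_zmod I q)" and i: "i \<in> I"
  shows "(d \<otimes>\<^bsub>prod_zmod I q\<^esub> finsum (prod_zmod I q) (\<lambda>j. cst I q (c j)) S) i = (d i * (\<Sum>j\<in>S. c j)) mod q"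
proof -
  have "(d \<otimes>\<^bsub>prod_zmod I q\<^esub> finsum (prod_zmod I q) (\<lambda>j. cst I q (c j)) S) i
     = (d i * ((\<Sum>j\<in>S. c j mod q) mod q)) mod q"
    using q fin d i by (subst finsum_eval) (auto simp: pz_simps cst_def pz_carrier)
  also have "\<dots> = (d i * (\<Sum>j\<in>S. c j)) mod q"
    by (simp add: mod_sum_eq mod_mult_right_eq)
  finally show ?thesis .
qed

lemma sum3: "(\<Sum>j\<in>{j. j < (3::nat) \<and> P j}. g j) =
   (if P 0 then g 0 else 0) + (if P 1 then g 1 else 0) + (if P 2 then (g 2::int) else 0)"
proof -
  have se: "{j. j < (3::nat) \<and> P j} = {j\<in>{..<3}. P j}" by auto
  have "(\<Sum>j\<in>{j. j < (3::nat) \<and> P j}. g j) = (\<Sum>j\<in>{..<3}. if P j then g j else 0)"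
    by (simp only: se sum.inter_filter[OF finite_lessThan])
  then show ?thesis by (simp add: eval_nat_numeral lessThan_Suc)
qed


definition Mx :: "int \<Rightarrow> nat \<Rightarrow> nat \<Rightarrow> int" where
  "Mx P r c = (if r = 0 then (if c = 0 then P else 0) else if r = 1 then (if c = 1 then P else 0)
     else if r = 2 then (if c < 2 then 1 else if c = 2 then -1 else 0) else 0)"

definition Amat :: "'i set \<Rightarrow> int \<Rightarrow> int \<Rightarrow> nat \<Rightarrow> nat \<Rightarrow> ('i \<Rightarrow> int)" where
  "Amat I q P = (\<lambda>r c. cst I q (Mx P r c))"

lemma three_cases: "j < (3::nat) \<Longrightarrow> j = 0 \<or> j = 1 \<or> j = 2" by arith

lemma all3: "(\<forall>j<(3::nat). Q j) \<longleftrightarrow> Q 0 \<and> Q 1 \<and> Q 2"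
proof
  assume "\<forall>j<(3::nat). Q j" then show "Q 0 \<and> Q 1 \<and> Q 2" by simp
next
  assume "Q 0 \<and> Q 1 \<and> Q 2" then show "\<forall>j<(3::nat). Q j" using three_cases by blast
qed

lemma dvd_aux1:
  fixes N P x :: int assumes "P \<noteq> 0" "N * P^2 dvd x * P" shows "N * P dvd x"
proof -
  have "(N*P) * P dvd x * P" using assms(2) by (simp add: power2_eq_square mult.assoc)
  then show ?thesis using assms(1) dvd_mult_cancel_right by blast
qed

lemma dvd_aux2:
  fixes N P a b :: int assumes "N * P dvd a" "N * P dvd b" shows "N * P^2 dvd a * b"
proof -
  obtain s t where "a = N*P*s" "b = N*P*t" using assms by (auto elim!: dvdE)
  then have "a * b = (N * P^2) * (N*s*t)" by (simp add: power2_eq_square algebra_simps)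
  then show ?thesis by simp
qed

lemma dvd_aux3:
  fixes N P a :: int assumes "N \<ge> 1" "N * P^2 dvd a" shows "N * P dvd a"
proof -
  have "N * P dvd N * P^2" by (simp add: power2_eq_square)
  then show ?thesis using assms(2) dvd_trans by blast
qed

lemma notgcc:
  fixes N P q :: int
  assumes N: "N \<ge> 1" and P: "P \<ge> 2" and q: "q = N * P^2"
  shows "\<not> generalised_columns_condition (prod_zmod I q) 3 3 (Amat I q P)"
proof
  have q0: "q > 1"
  proof -
    have "4 \<le> P*P" using mult_mono[of 2 P 2 P] P by simp
    then have "1*4 \<le> N*(P*P)" using mult_mono[of 1 N 4 "P*P"] N by simp
    then show ?thesis by (simp add: q power2_eq_square)
  qed
  have q00: "q > 0" using q0 by simp
  interpret cm: comm_monoid "prod_zmod I q" using pz_cm[OF q0] .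
  assume "generalised_columns_condition (prod_zmod I q) 3 3 (Amat I q P)"
  then obtain m :: nat and blk :: "nat \<Rightarrow> nat" and d where
    bl: "\<forall>j<3. blk j \<le> m" and ne: "\<forall>t\<le>m. \<exists>j<3. blk j = t"
    and dc: "\<forall>t\<le>m. d t \<in> carrier (prod_zmod I q) - {\<zero>\<^bsub>prod_zmod I q\<^esub>}"
    and c1: "\<forall>i<3. d 0 \<otimes>\<^bsub>prod_zmod I q\<^esub> (\<Oplus>\<^bsub>prod_zmod I q\<^esub>j\<in>{j. j < 3 \<and> blk j = 0}. Amat I q P i j) = \<zero>\<^bsub>prod_zmod I q\<^esub>"
    and c2: "\<forall>t. 1 \<le> t \<and> t \<le> m \<longrightarrow>
          (\<exists>a. (\<forall>j. j < 3 \<and> blk j < t \<longrightarrow> a j \<in> carrier (prod_zmod I q)) \<and>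
               (\<forall>i<3. d t \<otimes>\<^bsub>prod_zmod I q\<^esub> (\<Oplus>\<^bsub>prod_zmod I q\<^esub>j\<in>{j. j < 3 \<and> blk j = t}. Amat I q P i j)
                     = (\<Oplus>\<^bsub>prod_zmod I q\<^esub>j\<in>{j. j < 3 \<and> blk j < t}. a j \<otimes>\<^bsub>prod_zmod I q\<^esub> Amat I q P i j)))"
    and c3: "m > 0 \<longrightarrow> (\<forall>n::nat. infinite
          {d 0 \<otimes>\<^bsub>prod_zmod I q\<^esub> ((\<Otimes>\<^bsub>prod_zmod I q\<^esub>t\<in>{1..m}. d t) [^]\<^bsub>prod_zmod I q\<^esub> n) \<otimes>\<^bsub>prod_zmod I q\<^esub> y | y. y \<in> carrier (prod_zmod I q)})"
    unfolding generalised_columns_condition_def by (elim exE conjE) (rule that; assumption)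
  have d0c: "d 0 \<in> carrier (prod_zmod I q)" and d0n: "d 0 \<noteq> (\<lambda>i. 0)"
    using dc by (auto simp: pz_simps)
  then obtain i0 where i0: "d 0 i0 \<noteq> 0" by auto
  then have i0I: "i0 \<in> I" using d0c by (auto simp: pz_carrier)
  have nd: "\<not> q dvd d 0 i0"
  proof
    assume "q dvd d 0 i0"
    moreover have "0 \<le> d 0 i0" "d 0 i0 < q" using d0c i0I by (auto simp: pz_carrier)
    ultimately show False using i0 zdvd_imp_le by fastforce
  qed
  have E0: "q dvd d 0 i * (\<Sum>j\<in>{j. j<3 \<and> blk j = 0}. Mx P r j)" if "r < 3" "i \<in> I" for r i
  proof -
    have "(d 0 \<otimes>\<^bsub>prod_zmod I q\<^esub> (\<Oplus>\<^bsub>prod_zmod I q\<^esub>j\<in>{j. j < 3 \<and> blk j = 0}. cst I q (Mx P r j))) i = 0"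
      using c1 that by (simp add: Amat_def pz_simps)
    then have "(d 0 i * (\<Sum>j\<in>{j. j<3 \<and> blk j = 0}. Mx P r j)) mod q = 0"
      using prod_sum_cst[OF q00 _ d0c that(2), where S="{j. j<3 \<and> blk j = 0}" and c="Mx P r"] by simp
    then show ?thesis by (simp add: dvd_eq_mod_eq_0)
  qed
  have E1: "\<exists>a. (\<forall>j. j < 3 \<and> blk j = 0 \<longrightarrow> a j \<in> carrier (prod_zmod I q)) \<and>
     (\<forall>r<3. \<forall>i\<in>I. q dvd (d 1 i * (\<Sum>j\<in>{j. j<3 \<and> blk j = 1}. Mx P r j)
                   - (\<Sum>j\<in>{j. j<3 \<and> blk j = 0}. a j i * Mx P r j)))" if m1: "m = 1"
  proof -
    obtain a where ac: "\<forall>j. j < 3 \<and> blk j < 1 \<longrightarrow> a j \<in> carrier (prod_zmod I q)" and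
      ae: "\<forall>i<3. d 1 \<otimes>\<^bsub>prod_zmod I q\<^esub> (\<Oplus>\<^bsub>prod_zmod I q\<^esub>j\<in>{j. j < 3 \<and> blk j = 1}. Amat I q P i j)
                     = (\<Oplus>\<^bsub>prod_zmod I q\<^esub>j\<in>{j. j < 3 \<and> blk j < 1}. a j \<otimes>\<^bsub>prod_zmod I q\<^esub> Amat I q P i j)"
      using c2 m1 by auto
    have d1c: "d 1 \<in> carrier (prod_zmod I q)" using dc m1 by auto
    have lt: "{j. j < 3 \<and> blk j < (1::nat)} = {j. j < 3 \<and> blk j = 0}" by auto
    show ?thesis
    proof (intro exI conjI allI impI ballI)
      fix j assume "j < 3 \<and> blk j = 0" then show "a j \<in> carrier (prod_zmod I q)" using ac by auto
    next
      fix r i assume r: "r < (3::nat)" and i: "i \<in> I"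
      have "(d 1 \<otimes>\<^bsub>prod_zmod I q\<^esub> (\<Oplus>\<^bsub>prod_zmod I q\<^esub>j\<in>{j. j < 3 \<and> blk j = 1}. cst I q (Mx P r j))) i
         = (\<Oplus>\<^bsub>prod_zmod I q\<^esub>j\<in>{j. j < 3 \<and> blk j = 0}. a j \<otimes>\<^bsub>prod_zmod I q\<^esub> cst I q (Mx P r j)) i"
        using ae r lt by (simp add: Amat_def)
      then have "(d 1 i * (\<Sum>j\<in>{j. j<3 \<and> blk j = 1}. Mx P r j)) mod q
           = (\<Sum>j\<in>{j. j<3 \<and> blk j = 0}. a j i * Mx P r j) mod q"
        using prod_sum_cst[OF q00 _ d1c i, where S="{j. j<3 \<and> blk j = 1}" and c="Mx P r"]
          sum_cst_right[OF q00 _ _ i, where S="{j. j<3 \<and> blk j = 0}" and c="Mx P r" and a=a] ac by simp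
      then show "q dvd (d 1 i * (\<Sum>j\<in>{j. j<3 \<and> blk j = 1}. Mx P r j)
                   - (\<Sum>j\<in>{j. j<3 \<and> blk j = 0}. a j i * Mx P r j))"
        by (simp add: mod_eq_dvd_iff)
    qed
  qed
  have K: False if m1: "m = 1" and k0: "\<forall>i\<in>I. N * P dvd d 0 i" and k1: "\<forall>i\<in>I. N * P dvd d 1 i"
  proof -
    have d1c: "d 1 \<in> carrier (prod_zmod I q)" using dc m1 by auto
    have fp: "(\<Otimes>\<^bsub>prod_zmod I q\<^esub>t\<in>{1..m}. d t) [^]\<^bsub>prod_zmod I q\<^esub> (1::nat) = d 1"
      using m1 d1c by simp
    have "{d 0 \<otimes>\<^bsub>prod_zmod I q\<^esub> ((\<Otimes>\<^bsub>prod_zmod I q\<^esub>t\<in>{1..m}. d t) [^]\<^bsub>prod_zmod I q\<^esub> (1::nat)) \<otimes>\<^bsub>prod_zmod I q\<^esub> y | y. y \<in> carrier (prod_zmod I q)}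
       \<subseteq> {\<lambda>i. 0}"
    proof
      fix z assume "z \<in> {d 0 \<otimes>\<^bsub>prod_zmod I q\<^esub> ((\<Otimes>\<^bsub>prod_zmod I q\<^esub>t\<in>{1..m}. d t) [^]\<^bsub>prod_zmod I q\<^esub> (1::nat)) \<otimes>\<^bsub>prod_zmod I q\<^esub> y | y. y \<in> carrier (prod_zmod I q)}"
      then obtain y where yz: "z = d 0 \<otimes>\<^bsub>prod_zmod I q\<^esub> ((\<Otimes>\<^bsub>prod_zmod I q\<^esub>t\<in>{1..m}. d t) [^]\<^bsub>prod_zmod I q\<^esub> (1::nat)) \<otimes>\<^bsub>prod_zmod I q\<^esub> y"
        by blast
      then have yz': "z = d 0 \<otimes>\<^bsub>prod_zmod I q\<^esub> d 1 \<otimes>\<^bsub>prod_zmod I q\<^esub> y" unfolding fp .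
      have "d 0 \<otimes>\<^bsub>prod_zmod I q\<^esub> d 1 \<otimes>\<^bsub>prod_zmod I q\<^esub> y = (\<lambda>i. 0)"
      proof
        fix i show "(d 0 \<otimes>\<^bsub>prod_zmod I q\<^esub> d 1 \<otimes>\<^bsub>prod_zmod I q\<^esub> y) i = 0"
        proof (cases "i \<in> I")
          case True
          then have "q dvd d 0 i * d 1 i" using k0 k1 dvd_aux2 q by blast
          then have "(d 0 i * d 1 i) mod q = 0" by (simp add: dvd_eq_mod_eq_0)
          then show ?thesis using True by (simp add: pz_simps)
        qed (simp add: pz_simps)
      qed
      then show "z \<in> {\<lambda>i. 0}" using yz' by simp
    qed
    then have "finite {d 0 \<otimes>\<^bsub>prod_zmod I q\<^esub> ((\<Otimes>\<^bsub>prod_zmod I q\<^esub>t\<in>{1..m}. d t) [^]\<^bsub>prod_zmod I q\<^esub> (1::nat)) \<otimes>\<^bsub>prod_zmod I q\<^esub> y | y. y \<in> carrier (prod_zmod I q)}"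
      using finite_subset by blast
    moreover have "0 < m" using m1 by simp
    with c3 have "\<forall>n::nat. infinite {d 0 \<otimes>\<^bsub>prod_zmod I q\<^esub> ((\<Otimes>\<^bsub>prod_zmod I q\<^esub>t\<in>{1..m}. d t) [^]\<^bsub>prod_zmod I q\<^esub> n) \<otimes>\<^bsub>prod_zmod I q\<^esub> y | y. y \<in> carrier (prod_zmod I q)}"
      by (rule mp)
    ultimately show False by blast
  qed
  have ex: "blk 0 = 0 \<or> blk 1 = 0 \<or> blk 2 = 0"
  proof -
    obtain j where j: "j < 3" "blk j = 0" using ne[rule_format, OF le0] by blast
    from three_cases[OF j(1)] j(2) show ?thesis by (elim disjE) simp_all
  qed
  have R0: "q dvd d 0 i * P" if "i \<in> I" "blk 0 = 0" for i
    using E0[of 0 i] that by (simp add: sum3 Mx_def cong: if_cong)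
  have R1: "q dvd d 0 i * P" if "i \<in> I" "blk 1 = 0" for i
    using E0[of 1 i] that by (simp add: sum3 Mx_def cong: if_cong)
  have valid: "(blk 0 = 0 \<and> blk 1 = 0 \<and> blk 2 \<noteq> 0) \<or> (blk 0 = 0 \<and> blk 1 \<noteq> 0 \<and> blk 2 = 0)
      \<or> (blk 0 \<noteq> 0 \<and> blk 1 = 0 \<and> blk 2 = 0)"
  proof (rule ccontr)
    assume "\<not> ?thesis"
    then have "q dvd d 0 i0" using E0[OF _ i0I, of 2] ex
      by (cases "blk 0 = 0"; cases "blk 1 = 0"; cases "blk 2 = 0") (simp_all add: sum3 Mx_def)
    with nd show False by simp
  qed
  have P0: "P \<noteq> 0" using P by simp
  have k0: "\<forall>i\<in>I. N * P dvd d 0 i"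
  proof
    fix i assume i: "i \<in> I"
    have "blk 0 = 0 \<or> blk 1 = 0" using valid by auto
    then have "q dvd d 0 i * P" using R0[OF i] R1[OF i] by blast
    then show "N * P dvd d 0 i" using dvd_aux1[OF P0] q by blast
  qed
  obtain js where js: "js < 3" "blk js \<noteq> 0" "\<forall>j<3. j \<noteq> js \<longrightarrow> blk j = 0"
  proof -
    from valid show ?thesis
    proof (elim disjE conjE)
      assume "blk 0 = 0" "blk 1 = 0" "blk 2 \<noteq> 0"
      then show ?thesis by (intro that[of 2]) (auto simp: all3)
    next
      assume "blk 0 = 0" "blk 1 \<noteq> 0" "blk 2 = 0"
      then show ?thesis by (intro that[of 1]) (auto simp: all3)
    next
      assume "blk 0 \<noteq> 0" "blk 1 = 0" "blk 2 = 0"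
      then show ?thesis by (intro that[of 0]) (auto simp: all3)
    qed
  qed
  have bm: "blk js \<le> m" using bl js(1) by blast
  have m1: "m = 1"
  proof -
    have mg: "m \<ge> 1" using bm js(2) by linarith
    then obtain j where j: "j < 3" "blk j = 1" using ne by blast
    have "j = js" using js(3) j by (cases "j = js") auto
    obtain j' where j': "j' < 3" "blk j' = m" using ne by blast
    have "j' = js" using js(3) j' mg by (cases "j' = js") auto
    then show ?thesis using j j' \<open>j = js\<close> by simp
  qed
  have bjs: "blk js = 1" using bm js(2) m1 by linarith
  obtain a where ac: "\<forall>j. j < 3 \<and> blk j = 0 \<longrightarrow> a j \<in> carrier (prod_zmod I q)" and
     ad: "\<forall>r<3. \<forall>i\<in>I. q dvd (d 1 i * (\<Sum>j\<in>{j. j<3 \<and> blk j = 1}. Mx P r j)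
                   - (\<Sum>j\<in>{j. j<3 \<and> blk j = 0}. a j i * Mx P r j))"
    using E1[OF m1] by (elim exE conjE) (rule that; assumption)
  have k1: "\<forall>i\<in>I. N * P dvd d 1 i"
  proof
    fix i assume i: "i \<in> I"
    have "js = 0 \<or> js = 1 \<or> js = 2" using three_cases[OF js(1)] .
    then show "N * P dvd d 1 i"
    proof (elim disjE)
      assume "js = 0"
      then have b: "blk 0 = 1" "blk 1 = 0" "blk 2 = 0" using js bjs by auto
      have "q dvd d 1 i * P" using ad[rule_format, of 0 i] i b by (simp add: sum3 Mx_def cong: if_cong)
      then show ?thesis using dvd_aux1[OF P0] q by blast
    next
      assume "js = 1"
      then have b: "blk 0 = 0" "blk 1 = 1" "blk 2 = 0" using js bjs by auto
      have "q dvd d 1 i * P" using ad[rule_format, of 1 i] i b by (simp add: sum3 Mx_def cong: if_cong)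
      then show ?thesis using dvd_aux1[OF P0] q by blast
    next
      assume "js = 2"
      then have b: "blk 0 = 0" "blk 1 = 0" "blk 2 = 1" using js bjs by auto
      have "q dvd a 0 i * P" using ad[rule_format, of 0 i] i b by (simp add: sum3 Mx_def cong: if_cong)
      then have a0: "N * P dvd a 0 i" using dvd_aux1[OF P0] q by blast
      have "q dvd a 1 i * P" using ad[rule_format, of 1 i] i b by (simp add: sum3 Mx_def cong: if_cong)
      then have a1: "N * P dvd a 1 i" using dvd_aux1[OF P0] q by blast
      have "q dvd (d 1 i * -1 - (a 0 i + a 1 i))" using ad[rule_format, of 2 i] i b by (simp add: sum3 Mx_def cong: if_cong)
      then have "N * P dvd (d 1 i * -1 - (a 0 i + a 1 i))" using dvd_aux3[OF N] q by blast
      then have "N * P dvd (d 1 i * -1 - (a 0 i + a 1 i)) + (a 0 i + a 1 i)"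
        by (rule dvd_add) (rule dvd_add[OF a0 a1])
      then have "N * P dvd - d 1 i" by simp
      then show ?thesis by simp
    qed
  qed
  show False using K[OF m1 k0 k1] .
qed


lemma pr:
  fixes N P q :: int
  assumes N: "N \<ge> 1" and P: "P \<ge> 2" and q: "q = N * P^2" and inf: "infinite I"
  shows "partition_regular (prod_zmod I q) 3 3 (Amat I q P)"
  unfolding partition_regular_def
proof (intro allI impI)
  fix r :: nat and \<chi> assume r: "r \<ge> 1" and chi: "\<chi> \<in> carrier (prod_zmod I q) \<rightarrow> {1..r}"
  obtain e :: "nat \<Rightarrow> 'a" where e: "inj e" "range e \<subseteq> I"
    using infinite_countable_subset[OF inf] by blast
  have NP0: "0 < N * P" using N P by simp
  have NPq: "N * P < q"
  proof -
    have "N * P * 1 < N * P * P" using NP0 P by (intro mult_strict_left_mono) auto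
    then show ?thesis by (simp add: q power2_eq_square mult.assoc)
  qed
  have q00: "q > 0" using NP0 NPq by simp
  define h where "h a b = (\<lambda>c. if c \<in> e ` {a..<b} then N * P else 0)" for a b
  have hc: "h a b \<in> carrier (prod_zmod I q)" for a b
    using e NP0 NPq unfolding h_def pz_carrier by auto
  define f where "f X = \<chi> (h (Min X) (Max X))" for X :: "nat set"
  have part: "\<forall>x\<in>UNIV. \<forall>y\<in>UNIV. x \<noteq> y \<longrightarrow> f {x, y} < Suc r"
  proof (intro ballI impI)
    fix x y :: nat
    have "\<chi> (h (Min {x, y}) (Max {x, y})) \<in> {1..r}" using chi hc by blast
    then show "f {x, y} < Suc r" unfolding f_def by simp
  qed
  obtain Y t where Y: "infinite Y" and Yt: "\<forall>x\<in>Y. \<forall>y\<in>Y. x \<noteq> y \<longrightarrow> f {x, y} = t"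
    using Ramsey2[OF infinite_UNIV_nat part] by blast
  obtain i where i: "i \<in> Y" using Y by (metis finite.emptyI ex_in_conv)
  obtain j where j: "j \<in> Y" "i < j" using Y unfolding infinite_nat_iff_unbounded by blast
  obtain k where k: "k \<in> Y" "j < k" using Y unfolding infinite_nat_iff_unbounded by blast
  define x where "x = (\<lambda>c::nat. if c = 0 then h i j else if c = 1 then h j k else h i k)"
  have hsum: "h i j c + h j k c - h i k c = 0" for c
  proof (cases "c \<in> range e")
    case True
    then obtain z where z: "c = e z" by blast
    have m: "e z \<in> e ` A \<longleftrightarrow> z \<in> A" for A using e(1) by (simp add: inj_image_mem_iff)
    show ?thesis unfolding h_def z m using j k by auto
  next
    case False
    then show ?thesis unfolding h_def by auto
  qed
  have hP: "(P * h a b c) mod q = 0" for a b c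
  proof -
    have "P * (N * P) = q" by (simp add: q power2_eq_square algebra_simps)
    then show ?thesis unfolding h_def by auto
  qed
  have xc: "\<forall>c. x c \<in> carrier (prod_zmod I q)" unfolding x_def using hc by simp
  show "\<exists>x. (\<forall>j<3. x j \<in> carrier (prod_zmod I q)) \<and> (\<exists>j<3. x j \<noteq> \<zero>\<^bsub>prod_zmod I q\<^esub>) \<and>
           (\<forall>i<3. (\<Oplus>\<^bsub>prod_zmod I q\<^esub>j\<in>{..<3}. Amat I q P i j \<otimes>\<^bsub>prod_zmod I q\<^esub> x j) = \<zero>\<^bsub>prod_zmod I q\<^esub>) \<and>
           (\<exists>c. \<forall>j<3. \<chi> (x j) = c)"
  proof (rule exI[of _ x], intro conjI)
    show "\<forall>j<3. x j \<in> carrier (prod_zmod I q)" using xc by simp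
    have "x 0 (e i) \<noteq> 0" unfolding x_def h_def using j NP0 by auto
    then have "x 0 \<noteq> \<zero>\<^bsub>prod_zmod I q\<^esub>" by (auto simp: pz_simps)
    then show "\<exists>j<3. x j \<noteq> \<zero>\<^bsub>prod_zmod I q\<^esub>" by (intro exI[of _ 0]) simp
    show "\<forall>rr<3. (\<Oplus>\<^bsub>prod_zmod I q\<^esub>j\<in>{..<3}. Amat I q P rr j \<otimes>\<^bsub>prod_zmod I q\<^esub> x j) = \<zero>\<^bsub>prod_zmod I q\<^esub>"
    proof (intro allI impI)
      fix rr :: nat assume rr: "rr < 3"
      show "(\<Oplus>\<^bsub>prod_zmod I q\<^esub>j\<in>{..<3}. Amat I q P rr j \<otimes>\<^bsub>prod_zmod I q\<^esub> x j) = \<zero>\<^bsub>prod_zmod I q\<^esub>"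
        unfolding pz_simps(3)
      proof
        fix c0
        show "(\<Oplus>\<^bsub>prod_zmod I q\<^esub>j\<in>{..<3}. Amat I q P rr j \<otimes>\<^bsub>prod_zmod I q\<^esub> x j) c0 = 0"
        proof (cases "c0 \<in> I")
          case True
          have "(\<Oplus>\<^bsub>prod_zmod I q\<^esub>j\<in>{..<3}. Amat I q P rr j \<otimes>\<^bsub>prod_zmod I q\<^esub> x j) c0
             = (\<Sum>j\<in>{..<3}. Mx P rr j * x j c0) mod q"
            unfolding Amat_def using sum_cst_left[OF q00 _ _ True, where S="{..<3}" and a=x and c="Mx P rr"] xc
            by simp
          also have "\<dots> = (Mx P rr 0 * x 0 c0 + Mx P rr 1 * x 1 c0 + Mx P rr 2 * x 2 c0) mod q"
            by (simp add: eval_nat_numeral lessThan_Suc add.commute add.left_commute)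
          also have "\<dots> = 0"
          proof -
            have "rr = 0 \<or> rr = 1 \<or> rr = 2" using three_cases[OF rr] .
            then show ?thesis
            proof (elim disjE)
              assume "rr = 0" then show ?thesis using hP by (simp add: Mx_def x_def)
            next
              assume "rr = 1" then show ?thesis using hP by (simp add: Mx_def x_def)
            next
              assume "rr = 2" then show ?thesis using hsum[of c0] by (simp add: Mx_def x_def)
            qed
          qed
          finally show ?thesis .
        next
          case False
          have "(\<Oplus>\<^bsub>prod_zmod I q\<^esub>j\<in>{..<3}. Amat I q P rr j \<otimes>\<^bsub>prod_zmod I q\<^esub> x j) \<in> carrier (prod_zmod I q)"
          proof -
            interpret am: abelian_monoid "prod_zmod I q" using pz_am[OF q00] .
            have "\<And>c. Amat I q P rr c \<otimes>\<^bsub>prod_zmod I q\<^esub> x c \<in> carrier (prod_zmod I q)"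
              using xc q00 by (auto simp: Amat_def cst_def pz_carrier pz_simps)
            then show ?thesis by (intro am.finsum_closed) auto
          qed
          then show ?thesis using False by (simp add: pz_carrier)
        qed
      qed
    qed
    have "f {i, j} = t" using Yt i j by auto
    moreover have "f {j, k} = t" using Yt j k by auto
    moreover have "f {i, k} = t" using Yt i j k by auto
    ultimately have "\<chi> (h i j) = t" "\<chi> (h j k) = t" "\<chi> (h i k) = t"
      using j k unfolding f_def by auto
    then show "\<exists>c. \<forall>j<3. \<chi> (x j) = c"
      by (intro exI[of _ t]) (auto simp: all3 x_def)
  qed
qed

theorem corollary4p7:
  fixes n p :: nat and I :: "'i set"
  assumes "n > 0" and "prime p" and "infinite I"
  shows "\<exists>A. matrix_over (prod_zmod I (int (n * p^2))) 3 3 A \<and>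
             partition_regular (prod_zmod I (int (n * p^2))) 3 3 A \<and>
             \<not> generalised_columns_condition (prod_zmod I (int (n * p^2))) 3 3 A"
proof -
  define N where "N = int n"
  define P where "P = int p"
  have N: "N \<ge> 1" using assms(1) unfolding N_def by simp
  have P: "P \<ge> 2" using prime_ge_2_nat[OF assms(2)] unfolding P_def by simp
  have q: "int (n * p^2) = N * P^2" unfolding N_def P_def by simp
  have q0: "int (n * p^2) > 0" using N P unfolding q by simp
  show ?thesis
  proof (intro exI conjI)
    show "matrix_over (prod_zmod I (int (n * p^2))) 3 3 (Amat I (int (n * p^2)) P)"
      unfolding matrix_over_def Amat_def using cst_carrier[OF q0] by blast
    show "partition_regular (prod_zmod I (int (n * p^2))) 3 3 (Amat I (int (n * p^2)) P)"
      by (rule pr[OF N P q assms(3)])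
    show "\<not> generalised_columns_condition (prod_zmod I (int (n * p^2))) 3 3 (Amat I (int (n * p^2)) P)"
      by (rule notgcc[OF N P q])
  qed
qed

end
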